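(* Let $D$ be a Dirac operator for a finite complex spectral triple $(\mathcal A,\mathcal H,\pi,J,\gamma)$ and let $\Omega^1_D:=\mathrm{span}\{\pi(a)[D,\pi(b)]:a,b\in\mathcal A\}\subseteq B(\mathcal H)$. If $\omega\in\Omega^1_D$ satisfies $\pi(a)\omega=\omega\pi(a)$ for all $a\in\mathcal A$, then $\omega=0$.
   Context: Let $\mathcal A=\bigoplus_{i=1}^k M_{n_i}(\mathbb C)$ ($n_i\ge 1$), with involution $a\mapsto a^*$ given by blockwise conjugate transpose. A finite complex spectral triple over $\mathcal A$ consists of: a finite-dimensional complex Hilbert space $\mathcal H$; a faithful $*$-representation $\pi:\mathcal A\to B(\mathcal H)$; an antilinear isometry $J$ of $\mathcal H$ with $J^2=1$ such that $\pi^0(a):=J\pi(a)^*J$ defines a representation of the opposite algebra $\mathcal A^0$ and $[\pi^0(a),\pi(b)]=0$ for all $a,b\in\mathcal A$; and a grading $\gamma\in B(\mathcal H)$ with $\gamma^*=\gamma$, $\gamma^2=1$, $J\gamma=\gamma J$, $\gamma\pi(a)=\pi(a)\gamma$ for all $a$, and $\gamma=\sum_m\pi(x_m)\pi^0(y_m)$ for finitely many $x_m,y_m\in\mathcal A$. A Dirac operator is a self-adjoint $D\in B(\mathcal H)$ with $DJ=JD$, $D\gamma=-\gamma D$ and $[[D,\pi(a)],\pi^0(b)]=0$ for all $a,b\in\mathcal A$. The space $\Omega^1_D$ is (isomorphic to) the first-order differential calculus $\Omega^1(\mathcal A)$ of the spectral triple, an $\mathcal A$-bimodule via left and right multiplication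 by $\pi(\mathcal A)$. *)

theory Defs
  imports "Jordan_Normal_Form.Schur_Decomposition"
begin

text \<open>The algebra A = M_{n_1}(C) (+) ... (+) M_{n_k}(C), with sizes ns = [n_1,...,n_k];
  an element is a list of square complex matrices with the prescribed sizes.\<close>

definition alg :: "nat list \<Rightarrow> complex mat list set" where
  "alg ns = {as. length as = length ns \<and>
                 (\<forall>i<length ns. as ! i \<in> carrier_mat (ns ! i) (ns ! i))}"

definition alg_add :: "complex mat list \<Rightarrow> complex mat list \<Rightarrow> complex mat list" where
  "alg_add as bs = map2 (+) as bs"

definition alg_mult :: "complex mat list \<Rightarrow> complex mat list \<Rightarrow> complex mat list" where
  "alg_mult as bs = map2 (*) as bs"

definition alg_smult :: "complex \<Rightarrow> complex mat list \<Rightarrow> complex mat list" where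
  "alg_smult c as = map (\<lambda>a. c \<cdot>\<^sub>m a) as"

definition alg_star :: "complex mat list \<Rightarrow> complex mat list" where
  "alg_star as = map mat_adjoint as"

text \<open>The Hilbert space H is C^N (complex vectors of dimension N, inner product v \<bullet>c w);
  bounded operators are N x N complex matrices; the adjoint is mat_adjoint.\<close>

definition faithful_star_rep ::
  "nat list \<Rightarrow> nat \<Rightarrow> (complex mat list \<Rightarrow> complex mat) \<Rightarrow> bool" where
  "faithful_star_rep ns N \<pi> \<longleftrightarrow>
     (\<forall>a\<in>alg ns. \<pi> a \<in> carrier_mat N N) \<and>
     (\<forall>a\<in>alg ns. \<forall>b\<in>alg ns. \<pi> (alg_add a b) = \<pi> a + \<pi> b) \<and>
     (\<forall>a\<in>alg ns. \<forall>c. \<pi> (alg_smult c a) = c \<cdot>\<^sub>m \<pi> a) \<and>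
     (\<forall>a\<in>alg ns. \<forall>b\<in>alg ns. \<pi> (alg_mult a b) = \<pi> a * \<pi> b) \<and>
     (\<forall>a\<in>alg ns. \<pi> (alg_star a) = mat_adjoint (\<pi> a)) \<and>
     inj_on \<pi> (alg ns)"

definition antilinear_isometric_involution ::
  "nat \<Rightarrow> (complex vec \<Rightarrow> complex vec) \<Rightarrow> bool" where
  "antilinear_isometric_involution N J \<longleftrightarrow>
     (\<forall>v\<in>carrier_vec N. J v \<in> carrier_vec N) \<and>
     (\<forall>v\<in>carrier_vec N. \<forall>w\<in>carrier_vec N. J (v + w) = J v + J w) \<and>
     (\<forall>v\<in>carrier_vec N. \<forall>c. J (c \<cdot>\<^sub>v v) = cnj c \<cdot>\<^sub>v J v) \<and>
     (\<forall>v\<in>carrier_vec N. J v \<bullet>c J v = v \<bullet>c v) \<and>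
     (\<forall>v\<in>carrier_vec N. J (J v) = v)"

definition pi0 :: "(complex vec \<Rightarrow> complex vec) \<Rightarrow> (complex mat list \<Rightarrow> complex mat)
                    \<Rightarrow> complex mat list \<Rightarrow> complex vec \<Rightarrow> complex vec" where
  "pi0 J \<pi> a v = J (mat_adjoint (\<pi> a) *\<^sub>v J v)"

definition finite_spectral_triple ::
  "nat list \<Rightarrow> nat \<Rightarrow> (complex mat list \<Rightarrow> complex mat) \<Rightarrow> (complex vec \<Rightarrow> complex vec)
     \<Rightarrow> complex mat \<Rightarrow> bool" where
  "finite_spectral_triple ns N \<pi> J \<gamma> \<longleftrightarrow>
     (\<forall>i<length ns. ns ! i \<ge> 1) \<and>
     faithful_star_rep ns N \<pi> \<and>
     antilinear_isometric_involution N J \<and>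
     \<comment> \<open>pi^0 is a representation of the opposite algebra\<close>
     (\<forall>a\<in>alg ns. \<forall>b\<in>alg ns. \<forall>v\<in>carrier_vec N.
         pi0 J \<pi> (alg_add a b) v = pi0 J \<pi> a v + pi0 J \<pi> b v) \<and>
     (\<forall>a\<in>alg ns. \<forall>c. \<forall>v\<in>carrier_vec N.
         pi0 J \<pi> (alg_smult c a) v = c \<cdot>\<^sub>v pi0 J \<pi> a v) \<and>
     (\<forall>a\<in>alg ns. \<forall>b\<in>alg ns. \<forall>v\<in>carrier_vec N.
         pi0 J \<pi> (alg_mult a b) v = pi0 J \<pi> b (pi0 J \<pi> a v)) \<and>
     \<comment> \<open>order-zero condition [pi^0(a), pi(b)] = 0\<close>
     (\<forall>a\<in>alg ns. \<forall>b\<in>alg ns. \<forall>v\<in>carrier_vec N.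
         pi0 J \<pi> a (\<pi> b *\<^sub>v v) = \<pi> b *\<^sub>v pi0 J \<pi> a v) \<and>
     \<comment> \<open>grading\<close>
     \<gamma> \<in> carrier_mat N N \<and> mat_adjoint \<gamma> = \<gamma> \<and> \<gamma> * \<gamma> = 1\<^sub>m N \<and>
     (\<forall>v\<in>carrier_vec N. J (\<gamma> *\<^sub>v v) = \<gamma> *\<^sub>v J v) \<and>
     (\<forall>a\<in>alg ns. \<gamma> * \<pi> a = \<pi> a * \<gamma>) \<and>
     (\<exists>ps. set ps \<subseteq> alg ns \<times> alg ns \<and>
        (\<forall>v\<in>carrier_vec N.
           \<gamma> *\<^sub>v v = foldr (\<lambda>(x, y) acc. \<pi> x *\<^sub>v pi0 J \<pi> y v + acc) ps (0\<^sub>v N)))"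

definition dirac_operator ::
  "nat list \<Rightarrow> nat \<Rightarrow> (complex mat list \<Rightarrow> complex mat) \<Rightarrow> (complex vec \<Rightarrow> complex vec)
     \<Rightarrow> complex mat \<Rightarrow> complex mat \<Rightarrow> bool" where
  "dirac_operator ns N \<pi> J \<gamma> D \<longleftrightarrow>
     D \<in> carrier_mat N N \<and> mat_adjoint D = D \<and>
     (\<forall>v\<in>carrier_vec N. J (D *\<^sub>v v) = D *\<^sub>v J v) \<and>
     D * \<gamma> = - (\<gamma> * D) \<and>
     (\<forall>a\<in>alg ns. \<forall>b\<in>alg ns. \<forall>v\<in>carrier_vec N.
        pi0 J \<pi> b ((D * \<pi> a - \<pi> a * D) *\<^sub>v v) = (D * \<pi> a - \<pi> a * D) *\<^sub>v pi0 J \<pi> b v)"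

definition Omega1D ::
  "nat list \<Rightarrow> nat \<Rightarrow> (complex mat list \<Rightarrow> complex mat) \<Rightarrow> complex mat \<Rightarrow> complex mat set" where
  "Omega1D ns N \<pi> D =
     {foldr (\<lambda>(c, a, b) acc. c \<cdot>\<^sub>m (\<pi> a * (D * \<pi> b - \<pi> b * D)) + acc) ts (0\<^sub>m N N) | ts.
        set ts \<subseteq> UNIV \<times> alg ns \<times> alg ns}"

end

theory Submission imports Defs begin

lemma adj_carrier[simp]: "A \<in> carrier_mat n m \<Longrightarrow> mat_adjoint A \<in> carrier_mat m n"
  unfolding mat_adjoint_def by auto

lemma mat_eq_vec:
  fixes A B :: "'a::field mat"
  assumes A: "A \<in> carrier_mat n n" and B: "B \<in> carrier_mat n n"
    and h: "\<And>v. v \<in> carrier_vec n \<Longrightarrow> A *\<^sub>v v = B *\<^sub>v v"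
  shows "A = B"
proof -
  have "\<And>i j. i < n \<Longrightarrow> j < n \<Longrightarrow> A $$ (i, j) = B $$ (i, j)"
  proof -
    fix i j assume ij: "i < n" "j < n"
    have e: "A *\<^sub>v unit_vec n j = B *\<^sub>v unit_vec n j" using h[of "unit_vec n j"] by simp
    have 1: "(A *\<^sub>v unit_vec n j) $ i = A $$ (i, j)" using A ij
      by (simp add: scalar_prod_right_unit index_mult_mat_vec)
    have 2: "(B *\<^sub>v unit_vec n j) $ i = B $$ (i, j)" using B ij
      by (simp add: scalar_prod_right_unit index_mult_mat_vec)
    show "A $$ (i, j) = B $$ (i, j)" using e 1 2 by metis
  qed
  thus ?thesis using A B by (intro eq_matI) auto
qed

lemma pi0_add:
  assumes J: "antilinear_isometric_involution N J" and M: "\<pi> a \<in> carrier_mat N N"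
    and v: "v \<in> carrier_vec N" and w: "w \<in> carrier_vec N"
  shows "pi0 J \<pi> a (v + w) = pi0 J \<pi> a v + pi0 J \<pi> a w"
proof -
  have Jv: "J v \<in> carrier_vec N" "J w \<in> carrier_vec N" using J v w unfolding antilinear_isometric_involution_def by auto
  have "mat_adjoint (\<pi> a) *\<^sub>v J (v + w) = mat_adjoint (\<pi> a) *\<^sub>v J v + mat_adjoint (\<pi> a) *\<^sub>v J w"
    using J v w Jv M unfolding antilinear_isometric_involution_def
    by (simp add: mult_add_distrib_mat_vec[of _ N N])
  moreover have "mat_adjoint (\<pi> a) *\<^sub>v J v \<in> carrier_vec N" "mat_adjoint (\<pi> a) *\<^sub>v J w \<in> carrier_vec N"
    using Jv M by (metis adj_carrier mult_mat_vec_carrier)+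
  ultimately show ?thesis unfolding pi0_def using J Jv M unfolding antilinear_isometric_involution_def by simp
qed

lemma pi0_smult:
  assumes J: "antilinear_isometric_involution N J" and M: "\<pi> a \<in> carrier_mat N N"
    and v: "v \<in> carrier_vec N"
  shows "pi0 J \<pi> a (c \<cdot>\<^sub>v v) = c \<cdot>\<^sub>v pi0 J \<pi> a v"
proof -
  have Jv: "J v \<in> carrier_vec N" using J v unfolding antilinear_isometric_involution_def by auto
  have "mat_adjoint (\<pi> a) *\<^sub>v J (c \<cdot>\<^sub>v v) = cnj c \<cdot>\<^sub>v (mat_adjoint (\<pi> a) *\<^sub>v J v)"
    using J v Jv M unfolding antilinear_isometric_involution_def
    by (simp add: mult_mat_vec[of _ N N])
  moreover have "mat_adjoint (\<pi> a) *\<^sub>v J v \<in> carrier_vec N"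
    using Jv M by (metis adj_carrier mult_mat_vec_carrier)+
  ultimately show ?thesis unfolding pi0_def using J Jv M unfolding antilinear_isometric_involution_def by simp
qed

lemma pi0_carrier:
  assumes J: "antilinear_isometric_involution N J" and M: "\<pi> a \<in> carrier_mat N N"
    and v: "v \<in> carrier_vec N"
  shows "pi0 J \<pi> a v \<in> carrier_vec N"
proof -
  have Jv: "J v \<in> carrier_vec N" using J v unfolding antilinear_isometric_involution_def by auto
  have "mat_adjoint (\<pi> a) *\<^sub>v J v \<in> carrier_vec N"
    using Jv M by (metis adj_carrier mult_mat_vec_carrier)
  thus ?thesis using J unfolding pi0_def antilinear_isometric_involution_def by auto
qed

lemma neg_minus_neg_mat: "A \<in> carrier_mat n m \<Longrightarrow> B \<in> carrier_mat n m \<Longrightarrow> - A - - B = - (A - B :: 'a::ab_group_add mat)"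
  by (intro eq_matI) auto

lemma smult_neg_mat: "(c::'a::ring) \<cdot>\<^sub>m (- A) = - (c \<cdot>\<^sub>m A)"
  by (intro eq_matI) auto

lemma anti_comm:
  fixes g D P Q :: "complex mat"
  assumes c: "g \<in> carrier_mat N N" "D \<in> carrier_mat N N" "P \<in> carrier_mat N N" "Q \<in> carrier_mat N N"
  and gD: "D * g = - (g * D)" and gP: "g * P = P * g" and gQ: "g * Q = Q * g"
  shows "g * (c \<cdot>\<^sub>m (P * (D * Q - Q * D))) = - ((c \<cdot>\<^sub>m (P * (D * Q - Q * D))) * g)"
proof -
  have gD': "g * D = - (D * g)" using gD by simp
  have 1: "g * (D * Q) = - ((D * Q) * g)"
  proof -
    have "g * (D * Q) = (g * D) * Q" using c by simp
    also have "\<dots> = - (D * g * Q)" using gD' c by simp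
    also have "\<dots> = - (D * (g * Q))" using c by simp
    also have "\<dots> = - (D * (Q * g))" using gQ by simp
    also have "\<dots> = - ((D * Q) * g)" using c by simp
    finally show ?thesis .
  qed
  have 2: "g * (Q * D) = - ((Q * D) * g)"
  proof -
    have "g * (Q * D) = (g * Q) * D" using c by simp
    also have "\<dots> = Q * (g * D)" using c gQ by simp
    also have "\<dots> = - (Q * (D * g))" using gD' c by simp
    also have "\<dots> = - ((Q * D) * g)" using c by simp
    finally show ?thesis .
  qed
  have 3: "g * (D * Q - Q * D) = - ((D * Q - Q * D) * g)"
  proof -
    have "g * (D * Q - Q * D) = g * (D * Q) - g * (Q * D)"
      using c by (simp add: mult_minus_distrib_mat[where nr=N and n=N and nc=N])
    also have "\<dots> = - ((D * Q) * g) - - ((Q * D) * g)" using 1 2 by simp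
    also have "\<dots> = - ((D * Q) * g - (Q * D) * g)" using c by (intro neg_minus_neg_mat[of _ N N]) auto
    also have "\<dots> = - ((D * Q - Q * D) * g)" using c by (simp add: minus_mult_distrib_mat[where nr=N and n=N and nc=N])
    finally show ?thesis .
  qed
  have cC: "D * Q - Q * D \<in> carrier_mat N N" using c by auto
  have "g * (c \<cdot>\<^sub>m (P * (D * Q - Q * D))) = c \<cdot>\<^sub>m (g * (P * (D * Q - Q * D)))"
    using c cC by (simp add: mult_smult_distrib[where nr=N and n=N and nc=N])
  also have "g * (P * (D * Q - Q * D)) = (g * P) * (D * Q - Q * D)" using c cC by simp
  also have "\<dots> = P * (g * (D * Q - Q * D))" using c cC gP by simp
  also have "\<dots> = - (P * (D * Q - Q * D) * g)" using 3 c cC by simp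
  also have "c \<cdot>\<^sub>m \<dots> = - ((c \<cdot>\<^sub>m (P * (D * Q - Q * D))) * g)"
    using c cC by (simp add: smult_neg_mat mult_smult_assoc_mat[where nr=N and n=N and nc=N])
  finally show ?thesis .
qed

lemma smult_mat_vec: "A \<in> carrier_mat n m \<Longrightarrow> v \<in> carrier_vec m \<Longrightarrow> (c \<cdot>\<^sub>m A) *\<^sub>v v = (c::complex) \<cdot>\<^sub>v (A *\<^sub>v v)"
  by (intro eq_vecI) (auto simp: scalar_prod_def sum_distrib_left ac_simps)

lemma neg_add_neg_mat: "A \<in> carrier_mat n m \<Longrightarrow> B \<in> carrier_mat n m \<Longrightarrow> - A + - B = - (A + B :: 'a::ab_group_add mat)"
  by (intro eq_matI) auto

lemma self_neg_mat: "A = - A \<Longrightarrow> A \<in> carrier_mat n m \<Longrightarrow> A = 0\<^sub>m n m" for A :: "complex mat"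
proof (intro eq_matI)
  fix i j assume "A = - A" "A \<in> carrier_mat n m" "i < dim_row (0\<^sub>m n m)" "j < dim_col (0\<^sub>m n m)"
  hence "A $$ (i,j) = - A $$ (i,j)" by (metis index_uminus_mat(1) index_zero_mat(2,3) carrier_matD)
  thus "A $$ (i,j) = 0\<^sub>m n m $$ (i,j)" using \<open>i < _\<close> \<open>j < _\<close> by simp
qed auto

lemma zero_mat_vec: "v \<in> carrier_vec m \<Longrightarrow> (0\<^sub>m n m :: complex mat) *\<^sub>v v = 0\<^sub>v n"
  by (intro eq_vecI) (auto simp: scalar_prod_def)

lemma mat_zero_vec: "A \<in> carrier_mat n m \<Longrightarrow> (A :: complex mat) *\<^sub>v 0\<^sub>v m = 0\<^sub>v n"
  by (intro eq_vecI) (auto simp: scalar_prod_def)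

theorem mainTheorem9:
  fixes ns :: "nat list" and N :: nat
    and \<pi> :: "complex mat list \<Rightarrow> complex mat"
    and J :: "complex vec \<Rightarrow> complex vec"
    and \<gamma> D \<omega> :: "complex mat"
  assumes "finite_spectral_triple ns N \<pi> J \<gamma>"
    and "dirac_operator ns N \<pi> J \<gamma> D"
    and "\<omega> \<in> Omega1D ns N \<pi> D"
    and "\<forall>a\<in>alg ns. \<pi> a * \<omega> = \<omega> * \<pi> a"
  shows "\<omega> = 0\<^sub>m N N"
proof -
  note T = assms(1)[unfolded finite_spectral_triple_def faithful_star_rep_def]
  note Dd = assms(2)[unfolded dirac_operator_def]
  have rep: "\<And>a. a \<in> alg ns \<Longrightarrow> \<pi> a \<in> carrier_mat N N" using T by blast
  have J: "antilinear_isometric_involution N J" using T by blast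
  have oz: "\<And>a b v. a \<in> alg ns \<Longrightarrow> b \<in> alg ns \<Longrightarrow> v \<in> carrier_vec N \<Longrightarrow>
       pi0 J \<pi> a (\<pi> b *\<^sub>v v) = \<pi> b *\<^sub>v pi0 J \<pi> a v" using T by blast
  have gc: "\<gamma> \<in> carrier_mat N N" and gg: "\<gamma> * \<gamma> = 1\<^sub>m N" using T by blast+
  have gP: "\<And>a. a \<in> alg ns \<Longrightarrow> \<gamma> * \<pi> a = \<pi> a * \<gamma>" using T by blast
  obtain ps where ps: "set ps \<subseteq> alg ns \<times> alg ns"
    and gps: "\<And>v. v \<in> carrier_vec N \<Longrightarrow> \<gamma> *\<^sub>v v = foldr (\<lambda>(x, y) acc. \<pi> x *\<^sub>v pi0 J \<pi> y v + acc) ps (0\<^sub>v N)"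
    using T by blast
  have Dc: "D \<in> carrier_mat N N" and gD: "D * \<gamma> = - (\<gamma> * D)" using Dd by blast+
  have fo: "\<And>a b v. a \<in> alg ns \<Longrightarrow> b \<in> alg ns \<Longrightarrow> v \<in> carrier_vec N \<Longrightarrow>
        pi0 J \<pi> b ((D * \<pi> a - \<pi> a * D) *\<^sub>v v) = (D * \<pi> a - \<pi> a * D) *\<^sub>v pi0 J \<pi> b v"
    using Dd by blast
  obtain ts where ts: "set ts \<subseteq> UNIV \<times> alg ns \<times> alg ns"
    and om: "\<omega> = foldr (\<lambda>(c, a, b) acc. c \<cdot>\<^sub>m (\<pi> a * (D * \<pi> b - \<pi> b * D)) + acc) ts (0\<^sub>m N N)"
    using assms(3) unfolding Omega1D_def by blast
  define P where "P W \<longleftrightarrow> W \<in> carrier_mat N N \<and> \<gamma> * W = - (W * \<gamma>) \<and>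
      (\<forall>y\<in>alg ns. \<forall>v\<in>carrier_vec N. pi0 J \<pi> y (W *\<^sub>v v) = W *\<^sub>v pi0 J \<pi> y v)" for W
  have pi0_zero: "pi0 J \<pi> y (0\<^sub>v N) = 0\<^sub>v N" if "y \<in> alg ns" for y
  proof -
    have "pi0 J \<pi> y ((0::complex) \<cdot>\<^sub>v 0\<^sub>v N) = 0 \<cdot>\<^sub>v pi0 J \<pi> y (0\<^sub>v N)"
      by (rule pi0_smult[where \<pi>=\<pi> and a=y, OF J rep[OF that]]) simp
    moreover have z: "\<And>w. w \<in> carrier_vec N \<Longrightarrow> (0::complex) \<cdot>\<^sub>v w = 0\<^sub>v N"
      by (intro eq_vecI) auto
    ultimately show ?thesis using pi0_carrier[where \<pi>=\<pi> and a=y, OF J rep[OF that], of "0\<^sub>v N"]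
      z[of "0\<^sub>v N"] by auto
  qed
  have Pterm: "P (c \<cdot>\<^sub>m (\<pi> a * (D * \<pi> b - \<pi> b * D)))" if ab: "a \<in> alg ns" "b \<in> alg ns" for c a b
  proof -
    have Pa: "\<pi> a \<in> carrier_mat N N" and Pb: "\<pi> b \<in> carrier_mat N N" using rep ab by auto
    have Cc: "D * \<pi> b - \<pi> b * D \<in> carrier_mat N N" using Pb Dc by auto
    have "\<gamma> * (c \<cdot>\<^sub>m (\<pi> a * (D * \<pi> b - \<pi> b * D))) = - ((c \<cdot>\<^sub>m (\<pi> a * (D * \<pi> b - \<pi> b * D))) * \<gamma>)"
      by (rule anti_comm[OF gc Dc Pa Pb gD gP[OF ab(1)] gP[OF ab(2)]])
    moreover have "pi0 J \<pi> y ((c \<cdot>\<^sub>m (\<pi> a * (D * \<pi> b - \<pi> b * D))) *\<^sub>v v)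
        = (c \<cdot>\<^sub>m (\<pi> a * (D * \<pi> b - \<pi> b * D))) *\<^sub>v pi0 J \<pi> y v"
      if y: "y \<in> alg ns" and v: "v \<in> carrier_vec N" for y v
    proof -
      have pv: "pi0 J \<pi> y v \<in> carrier_vec N" using pi0_carrier[where \<pi>=\<pi> and a=y, OF J rep[OF y] v] .
      have Cv: "(D * \<pi> b - \<pi> b * D) *\<^sub>v v \<in> carrier_vec N" using Cc v by auto
      have PCv: "\<pi> a *\<^sub>v ((D * \<pi> b - \<pi> b * D) *\<^sub>v v) \<in> carrier_vec N" using Pa Cv by auto
      have "(c \<cdot>\<^sub>m (\<pi> a * (D * \<pi> b - \<pi> b * D))) *\<^sub>v v = c \<cdot>\<^sub>v (\<pi> a *\<^sub>v ((D * \<pi> b - \<pi> b * D) *\<^sub>v v))"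
        using Pa Cc v by (simp add: smult_mat_vec[where n=N and m=N])
      hence "pi0 J \<pi> y ((c \<cdot>\<^sub>m (\<pi> a * (D * \<pi> b - \<pi> b * D))) *\<^sub>v v)
          = c \<cdot>\<^sub>v pi0 J \<pi> y (\<pi> a *\<^sub>v ((D * \<pi> b - \<pi> b * D) *\<^sub>v v))"
        using pi0_smult[where \<pi>=\<pi> and a=y, OF J rep[OF y] PCv] by simp
      also have "\<dots> = c \<cdot>\<^sub>v (\<pi> a *\<^sub>v ((D * \<pi> b - \<pi> b * D) *\<^sub>v pi0 J \<pi> y v))"
        using oz[OF y ab(1) Cv] fo[OF ab(2) y v] by simp
      also have "\<dots> = (c \<cdot>\<^sub>m (\<pi> a * (D * \<pi> b - \<pi> b * D))) *\<^sub>v pi0 J \<pi> y v"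
        using Pa Cc pv by (simp add: smult_mat_vec[where n=N and m=N])
      finally show ?thesis .
    qed
    ultimately show ?thesis unfolding P_def using Pa Cc by auto
  qed
  have Padd: "P (A + B)" if "P A" "P B" for A B
  proof -
    have A: "A \<in> carrier_mat N N" and B: "B \<in> carrier_mat N N" using that unfolding P_def by auto
    have "\<gamma> * (A + B) = \<gamma> * A + \<gamma> * B" using A B gc by (simp add: mult_add_distrib_mat[where nr=N and n=N and nc=N])
    also have "\<dots> = - (A * \<gamma>) + - (B * \<gamma>)" using that unfolding P_def by auto
    also have "\<dots> = - (A * \<gamma> + B * \<gamma>)" using A B gc by (intro neg_add_neg_mat[where n=N and m=N]) auto
    also have "\<dots> = - ((A + B) * \<gamma>)" using A B gc by (simp add: add_mult_distrib_mat[where nr=N and n=N and nc=N])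
    finally have 1: "\<gamma> * (A + B) = - ((A + B) * \<gamma>)" .
    have 2: "pi0 J \<pi> y ((A + B) *\<^sub>v v) = (A + B) *\<^sub>v pi0 J \<pi> y v" if y: "y \<in> alg ns" and v: "v \<in> carrier_vec N" for y v
    proof -
      have pv: "pi0 J \<pi> y v \<in> carrier_vec N" using pi0_carrier[where \<pi>=\<pi> and a=y, OF J rep[OF y] v] .
      have "(A + B) *\<^sub>v v = A *\<^sub>v v + B *\<^sub>v v" using A B v by (simp add: add_mult_distrib_mat_vec[where nr=N and nc=N])
      moreover have "(A + B) *\<^sub>v pi0 J \<pi> y v = A *\<^sub>v pi0 J \<pi> y v + B *\<^sub>v pi0 J \<pi> y v"
        using A B pv by (simp add: add_mult_distrib_mat_vec[where nr=N and nc=N])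
      moreover have "pi0 J \<pi> y (A *\<^sub>v v + B *\<^sub>v v) = pi0 J \<pi> y (A *\<^sub>v v) + pi0 J \<pi> y (B *\<^sub>v v)"
        using pi0_add[where \<pi>=\<pi> and a=y, OF J rep[OF y]] A B v by auto
      ultimately show ?thesis using that \<open>P A\<close> \<open>P B\<close> unfolding P_def by auto
    qed
    show ?thesis unfolding P_def using 1 2 A B by auto
  qed
  have P0: "P (0\<^sub>m N N)" unfolding P_def using gc pi0_zero
    pi0_carrier[where \<pi>=\<pi>, OF J rep] by (auto simp: zero_mat_vec)
  have Pfold: "P (foldr (\<lambda>(c, a, b) acc. c \<cdot>\<^sub>m (\<pi> a * (D * \<pi> b - \<pi> b * D)) + acc) us (0\<^sub>m N N))"
    if "set us \<subseteq> UNIV \<times> alg ns \<times> alg ns" for us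
    using that
  proof (induction us)
    case Nil
    then show ?case using P0 by simp
  next
    case (Cons t us)
    obtain c a b where t: "t = (c, a, b)" by (cases t) auto
    show ?case using Cons t by (auto intro!: Padd Pterm)
  qed
  have Pom: "P \<omega>" using Pfold[OF ts] om by simp
  have oc: "\<omega> \<in> carrier_mat N N" using Pom unfolding P_def by auto
  have anti: "\<gamma> * \<omega> = - (\<omega> * \<gamma>)" using Pom unfolding P_def by auto
  have ocom: "\<And>y v. y \<in> alg ns \<Longrightarrow> v \<in> carrier_vec N \<Longrightarrow> pi0 J \<pi> y (\<omega> *\<^sub>v v) = \<omega> *\<^sub>v pi0 J \<pi> y v"
    using Pom unfolding P_def by auto
  have fold_vec: "foldr (\<lambda>(x, y) acc. \<pi> x *\<^sub>v pi0 J \<pi> y v + acc) qs (0\<^sub>v N) \<in> carrier_vec N \<and>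
      \<omega> *\<^sub>v foldr (\<lambda>(x, y) acc. \<pi> x *\<^sub>v pi0 J \<pi> y v + acc) qs (0\<^sub>v N)
      = foldr (\<lambda>(x, y) acc. \<pi> x *\<^sub>v pi0 J \<pi> y (\<omega> *\<^sub>v v) + acc) qs (0\<^sub>v N)"
    if "set qs \<subseteq> alg ns \<times> alg ns" "v \<in> carrier_vec N" for qs v
    using that
  proof (induction qs)
    case Nil
    then show ?case using oc by (simp add: mat_zero_vec)
  next
    case (Cons q qs)
    obtain x y where q: "q = (x, y)" by (cases q) auto
    have x: "x \<in> alg ns" and y: "y \<in> alg ns" using Cons.prems q by auto
    let ?acc = "foldr (\<lambda>(x, y) acc. \<pi> x *\<^sub>v pi0 J \<pi> y v + acc) qs (0\<^sub>v N)"
    have IH: "?acc \<in> carrier_vec N" "\<omega> *\<^sub>v ?acc = foldr (\<lambda>(x, y) acc. \<pi> x *\<^sub>v pi0 J \<pi> y (\<omega> *\<^sub>v v) + acc) qs (0\<^sub>v N)"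
      using Cons by auto
    have pv: "pi0 J \<pi> y v \<in> carrier_vec N" using pi0_carrier[where \<pi>=\<pi> and a=y, OF J rep[OF y] Cons.prems(2)] .
    have xv: "\<pi> x *\<^sub>v pi0 J \<pi> y v \<in> carrier_vec N" using rep[OF x] pv by auto
    have "\<omega> *\<^sub>v (\<pi> x *\<^sub>v pi0 J \<pi> y v + ?acc) = \<omega> *\<^sub>v (\<pi> x *\<^sub>v pi0 J \<pi> y v) + \<omega> *\<^sub>v ?acc"
      using oc xv IH(1) by (simp add: mult_add_distrib_mat_vec[where nr=N and nc=N])
    also have "\<omega> *\<^sub>v (\<pi> x *\<^sub>v pi0 J \<pi> y v) = (\<omega> * \<pi> x) *\<^sub>v pi0 J \<pi> y v"
      using oc rep[OF x] pv by simp
    also have "\<dots> = (\<pi> x * \<omega>) *\<^sub>v pi0 J \<pi> y v" using assms(4) x by simp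
    also have "\<dots> = \<pi> x *\<^sub>v pi0 J \<pi> y (\<omega> *\<^sub>v v)"
      using oc rep[OF x] pv ocom[OF y Cons.prems(2)] by simp
    finally show ?case using q IH xv by simp
  qed
  have comm: "\<omega> * \<gamma> = \<gamma> * \<omega>"
  proof (rule mat_eq_vec[where n=N])
    fix v :: "complex vec" assume v: "v \<in> carrier_vec N"
    have ov: "\<omega> *\<^sub>v v \<in> carrier_vec N" using oc v by auto
    have "(\<omega> * \<gamma>) *\<^sub>v v = \<omega> *\<^sub>v (\<gamma> *\<^sub>v v)" using oc gc v by simp
    also have "\<dots> = \<gamma> *\<^sub>v (\<omega> *\<^sub>v v)" using fold_vec[OF ps v] gps[OF v] gps[OF ov] by simp
    also have "\<dots> = (\<gamma> * \<omega>) *\<^sub>v v" using oc gc v by simp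
    finally show "(\<omega> * \<gamma>) *\<^sub>v v = (\<gamma> * \<omega>) *\<^sub>v v" .
  qed (use oc gc in auto)
  have og: "\<omega> * \<gamma> = 0\<^sub>m N N"
    by (rule self_neg_mat) (use comm anti oc gc in auto)
  have "\<omega> = \<omega> * (\<gamma> * \<gamma>)" using gg oc by simp
  also have "\<dots> = (\<omega> * \<gamma>) * \<gamma>" using oc gc by simp
  also have "\<dots> = 0\<^sub>m N N" using og gc by simp
  finally show ?thesis .
qed

end
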